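(* In the two-project discovery model described in the context, let $\mu_1=-\mu<0\le c\mu=\mu_2$ with $\mu>0$ and $c\in[0,1)$, and let $\sigma_1<\sigma_2$. Define $$c^*:=\frac{\rho\sigma_2}{\sigma_1+2\rho\sigma_2},\qquad c^{**}:=\frac{\sigma_2}{\rho\sigma_1+2\sigma_2}.$$ Then: 1. For any $c\in(c^*,c^{**})$ there exists $\underline{\mu}$ such that discovering project 1 is better than discovering project 2 for all $\mu>\underline{\mu}$. 2. For any $c\in(c^{**},1)$ there exists $\bar\mu$ such that discovering project 2 is better than discovering project 1 for all $\mu>\bar\mu$.
   Context: Model. There are two projects $i\in\{1,2\}$. The agent's values $v=(v_1,v_2)\in\mathbb{R}^2$ are drawn from a common prior that is bivariate normal with means $\mu_1,\mu_2$, standard deviations $\sigma_1,\sigma_2>0$ and correlation $\rho\in(0,1)$. The principal has weights $w_1,w_2\in[0,1]$ with $w_1+w_2=1$. Timing: (1) the principal chooses whether to publicly discover $v_1$, $v_2$, or neither; (2) the chosen value is publicly revealed and the agent forms a posterior by Bayes' rule; (3) knowing the revealed value, the principal proposes a subset $S\subseteq\{1,2\}$; (4) the agent approves iff $\sum_{i\in S}\mathbb{E}[v_i\mid\text{revealed information}]\ge 0$; (5) the principal receives $\sum_{i\in S}w_i$ if approved and $0$ otherwise. The principal chooses the proposal to maximize her payoff given the revealed information; "better" means strictly higher ex-ante expected payoff for the principal. *)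

theory Defs
  imports "HOL-Probability.Probability"
begin

text \<open>Two-project discovery model. Projects are indexed by 1 and 2.
  Prior: bivariate normal with means m i, standard deviations s i, correlation rho.\<close>

text \<open>Posterior mean of v_i after the value v_j = x has been publicly revealed
  (Bayes' rule for the bivariate normal prior).\<close>
definition post_mean :: "(nat \<Rightarrow> real) \<Rightarrow> (nat \<Rightarrow> real) \<Rightarrow> real \<Rightarrow> nat \<Rightarrow> real \<Rightarrow> nat \<Rightarrow> real" where
  "post_mean m s rho j x i = (if i = j then x else m i + rho * s i / s j * (x - m j))"

definition approves :: "(nat \<Rightarrow> real) \<Rightarrow> nat set \<Rightarrow> bool" where
  "approves e S \<longleftrightarrow> (\<Sum>i\<in>S. e i) \<ge> 0"

definition proposal_payoff :: "(nat \<Rightarrow> real) \<Rightarrow> (nat \<Rightarrow> real) \<Rightarrow> nat set \<Rightarrow> real" where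
  "proposal_payoff w e S = (if approves e S then (\<Sum>i\<in>S. w i) else 0)"

definition best_payoff :: "(nat \<Rightarrow> real) \<Rightarrow> (nat \<Rightarrow> real) \<Rightarrow> real" where
  "best_payoff w e = Max (proposal_payoff w e ` Pow {1, 2})"

definition discovery_value ::
  "(nat \<Rightarrow> real) \<Rightarrow> (nat \<Rightarrow> real) \<Rightarrow> real \<Rightarrow> (nat \<Rightarrow> real) \<Rightarrow> nat \<Rightarrow> real" where
  "discovery_value m s rho w j =
     (LINT x|lborel. normal_density (m j) (s j) x * best_payoff w (post_mean m s rho j x))"

end

theory Submission imports Defs "HOL-Real_Asymp.Real_Asymp" begin

lemma payoff_formula:
  fixes w1 w2 :: real and e :: "nat \<Rightarrow> real"
  assumes "0 < w1" "0 < w2" "w1 + w2 = 1"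
  shows "best_payoff (\<lambda>i::nat. if i = 1 then w1 else w2) e =
    w1 * (if e 1 + e 2 \<ge> 0 \<or> e 1 \<ge> 0 then 1 else 0) + w2 * (if e 1 + e 2 \<ge> 0 \<or> e 2 \<ge> 0 then 1 else 0)"
proof -
  let ?w = "\<lambda>i::nat. if i = 1 then w1 else w2"
  have P: "Pow {1::nat, 2} = {{}, {1}, {2}, {1,2}}" by (auto simp: Pow_def)
  have a: "proposal_payoff ?w e {} = 0" by (simp add: proposal_payoff_def)
  have b: "proposal_payoff ?w e {1} = (if e 1 \<ge> 0 then w1 else 0)" by (simp add: proposal_payoff_def approves_def)
  have c: "proposal_payoff ?w e {2} = (if e 2 \<ge> 0 then w2 else 0)" by (simp add: proposal_payoff_def approves_def)
  have d: "proposal_payoff ?w e {1,2} = (if e 1 + e 2 \<ge> 0 then 1 else 0)" using assms by (simp add: proposal_payoff_def approves_def)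
  have "best_payoff ?w e = Max {proposal_payoff ?w e {}, proposal_payoff ?w e {1}, proposal_payoff ?w e {2}, proposal_payoff ?w e {1,2}}"
    unfolding best_payoff_def P by simp
  also have "\<dots> = max 0 (max (if e 1 \<ge> 0 then w1 else 0) (max (if e 2 \<ge> 0 then w2 else 0) (if e 1 + e 2 \<ge> 0 then 1 else 0)))"
    unfolding a b c d by simp
  also have "\<dots> = w1 * (if e 1 + e 2 \<ge> 0 \<or> e 1 \<ge> 0 then 1 else 0) + w2 * (if e 1 + e 2 \<ge> 0 \<or> e 2 \<ge> 0 then 1 else 0)"
    using assms by (auto simp: max_def)
  finally show ?thesis .
qed

lemma cond_lemma:
  fixes p q c \<mu> z e1 e2 :: real
  assumes "0 < p" "0 < q" "0 \<le> c" "c < 1" "0 < \<mu>" "e1 = -\<mu> + p * z" "e2 = c * \<mu> + q * z"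
  shows "(e1 + e2 \<ge> 0 \<or> e1 \<ge> 0) \<longleftrightarrow> z \<ge> (1 - c) * \<mu> / (p + q)"
    and "(e1 + e2 \<ge> 0 \<or> e2 \<ge> 0) \<longleftrightarrow> \<not> z < - (c * \<mu> / q)"
proof -
  have pq: "0 < p + q" using assms by simp
  have s: "e1 + e2 = (p + q) * z - (1 - c) * \<mu>" using assms by (simp add: algebra_simps)
  have d1: "z \<ge> (1 - c) * \<mu> / (p + q) \<longleftrightarrow> (p + q) * z \<ge> (1 - c) * \<mu>"
    using pq by (simp add: pos_divide_le_eq mult.commute)
  have d2: "z < - (c * \<mu> / q) \<longleftrightarrow> q * z < - (c * \<mu>)"
    using assms(2) by (simp add: pos_less_divide_eq mult.commute) (smt (verit) divide_minus_left pos_less_divide_eq mult.commute)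
  have "e1 \<ge> 0 \<Longrightarrow> (p + q) * z \<ge> (1 - c) * \<mu>"
  proof -
    assume "e1 \<ge> 0"
    then have "p * z \<ge> \<mu>" using assms by simp
    then have "z > 0" using assms by (smt (verit) mult_nonneg_nonpos)
    then have "q * z > 0" using assms by simp
    moreover have "(1 - c) * \<mu> \<le> \<mu>" using assms by (simp add: mult_le_cancel_right1)
    ultimately show ?thesis using \<open>p * z \<ge> \<mu>\<close> by (simp add: distrib_right)
  qed
  then show "(e1 + e2 \<ge> 0 \<or> e1 \<ge> 0) \<longleftrightarrow> z \<ge> (1 - c) * \<mu> / (p + q)"
    using s d1 by auto
  have "e1 + e2 \<ge> 0 \<Longrightarrow> q * z \<ge> - (c * \<mu>)"
  proof -
    assume "e1 + e2 \<ge> 0"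
    then have "(p + q) * z \<ge> (1 - c) * \<mu>" using s by simp
    moreover have "(1 - c) * \<mu> > 0" using assms by simp
    ultimately have "z > 0" using pq by (smt (verit) mult_nonneg_nonpos)
    then show ?thesis using assms by (smt (verit) mult_nonneg_nonneg)
  qed
  then show "(e1 + e2 \<ge> 0 \<or> e2 \<ge> 0) \<longleftrightarrow> \<not> z < - (c * \<mu> / q)"
    using d2 assms by auto
qed

lemma subst_std:
  fixes f :: "real \<Rightarrow> real" and a s :: real
  assumes "0 < s"
  shows "(LINT x|lborel. normal_density a s x * f x) = (LINT z|lborel. std_normal_density z * f (a + s * z))"
proof -
  have "(LINT x|lborel. normal_density a s x * f x) = \<bar>s\<bar> *\<^sub>R (LINT z|lborel. normal_density a s (a + s * z) * f (a + s * z))"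
    using lborel_integral_real_affine[where c=s and t=a and f="\<lambda>x. normal_density a s x * f x"] assms by simp
  also have "\<dots> = (LINT z|lborel. s * (normal_density a s (a + s * z) * f (a + s * z)))"
    using assms by simp
  also have "\<dots> = (LINT z|lborel. std_normal_density z * f (a + s * z))"
  proof (rule Bochner_Integration.integral_cong[OF refl])
    fix z
    have "sqrt (2 * pi * s\<^sup>2) = s * sqrt (2 * pi)" using assms
      by (simp add: real_sqrt_mult)
    moreover have "(s * z)\<^sup>2 / (2 * s\<^sup>2) = z\<^sup>2 / 2" using assms by (simp add: power_mult_distrib)
    ultimately show "s * (normal_density a s (a + s * z) * f (a + s * z)) = std_normal_density z * f (a + s * z)"
      using assms unfolding normal_density_def by (simp add: field_simps)
  qed
  finally show ?thesis .
qed

lemma std_int_ind: "integrable lborel (\<lambda>z. std_normal_density z * indicator A z)" if "A \<in> sets borel"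
  using that by (intro integrable_real_mult_indicator) auto

lemma upper_tail_ub:
  fixes t \<epsilon> :: real
  assumes "0 < t" "0 < \<epsilon>" "\<epsilon> < 1"
  shows "(LINT z|lborel. std_normal_density z * indicator {t..} z) \<le> exp (-(1-\<epsilon>)*t\<^sup>2/2) / sqrt \<epsilon>"
proof -
  define g where "g = normal_density 0 (1 / sqrt \<epsilon>)"
  have "(LINT z|lborel. std_normal_density z * indicator {t..} z) \<le> (LINT z|lborel. exp (-(1-\<epsilon>)*t\<^sup>2/2) / sqrt \<epsilon> * g z)"
  proof (rule integral_mono)
    show "integrable lborel (\<lambda>z. std_normal_density z * indicator {t..} z)" by (rule std_int_ind) simp
    show "integrable lborel (\<lambda>z. exp (-(1-\<epsilon>)*t\<^sup>2/2) / sqrt \<epsilon> * g z)" unfolding g_def using assms by (intro integrable_mult_right integrable_normal_density) simp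
    fix z
    show "std_normal_density z * indicator {t..} z \<le> exp (-(1-\<epsilon>)*t\<^sup>2/2) / sqrt \<epsilon> * g z"
    proof (cases "z \<ge> t")
      case False then show ?thesis unfolding g_def using assms by (simp add: normal_density_nonneg)
    next
      case True
      have e: "(1 / sqrt \<epsilon>)\<^sup>2 = 1 / \<epsilon>" using assms by (simp add: power_divide)
      have sq: "sqrt (2 * pi * (1 / \<epsilon>)) = sqrt (2 * pi) / sqrt \<epsilon>" by (simp add: real_sqrt_mult real_sqrt_divide)
      have gz: "g z = sqrt \<epsilon> * (1 / sqrt (2 * pi) * exp (- \<epsilon> * z\<^sup>2 / 2))"
        unfolding g_def normal_density_def e sq using assms by (simp add: field_simps)
      have "t\<^sup>2 \<le> z\<^sup>2" using True assms by (simp add: power_mono)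
      then have "(1 - \<epsilon>) * t\<^sup>2 \<le> (1 - \<epsilon>) * z\<^sup>2" using assms by (simp add: mult_left_mono)
      then have "- z\<^sup>2 / 2 \<le> -(1-\<epsilon>)*t\<^sup>2/2 + (- \<epsilon> * z\<^sup>2 / 2)" by (simp add: algebra_simps)
      then have "exp (- z\<^sup>2 / 2) \<le> exp (-(1-\<epsilon>)*t\<^sup>2/2) * exp (- \<epsilon> * z\<^sup>2 / 2)"
        by (simp flip: exp_add)
      then have "1 / sqrt (2 * pi) * exp (- z\<^sup>2 / 2) \<le> 1 / sqrt (2 * pi) * (exp (-(1-\<epsilon>)*t\<^sup>2/2) * exp (- \<epsilon> * z\<^sup>2 / 2))"
        by (intro mult_left_mono) auto
      then show ?thesis using True assms unfolding gz std_normal_density_def by (simp add: field_simps)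
    qed
  qed
  also have "\<dots> = exp (-(1-\<epsilon>)*t\<^sup>2/2) / sqrt \<epsilon>" unfolding g_def using assms by (simp add: integral_normal_density)
  finally show ?thesis .
qed

lemma lower_tail_ub:
  fixes t \<epsilon> :: real
  assumes "0 < t" "0 < \<epsilon>" "\<epsilon> < 1"
  shows "(LINT z|lborel. std_normal_density z * indicator {..< -t} z) \<le> exp (-(1-\<epsilon>)*t\<^sup>2/2) / sqrt \<epsilon>"
proof -
  define g where "g = normal_density 0 (1 / sqrt \<epsilon>)"
  have "(LINT z|lborel. std_normal_density z * indicator {..< -t} z) \<le> (LINT z|lborel. exp (-(1-\<epsilon>)*t\<^sup>2/2) / sqrt \<epsilon> * g z)"
  proof (rule integral_mono)
    show "integrable lborel (\<lambda>z. std_normal_density z * indicator {..< -t} z)" by (rule std_int_ind) simp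
    show "integrable lborel (\<lambda>z. exp (-(1-\<epsilon>)*t\<^sup>2/2) / sqrt \<epsilon> * g z)" unfolding g_def using assms by (intro integrable_mult_right integrable_normal_density) simp
    fix z
    show "std_normal_density z * indicator {..< -t} z \<le> exp (-(1-\<epsilon>)*t\<^sup>2/2) / sqrt \<epsilon> * g z"
    proof (cases "z < -t")
      case False then show ?thesis unfolding g_def using assms by (simp add: normal_density_nonneg)
    next
      case True
      have e: "(1 / sqrt \<epsilon>)\<^sup>2 = 1 / \<epsilon>" using assms by (simp add: power_divide)
      have sq: "sqrt (2 * pi * (1 / \<epsilon>)) = sqrt (2 * pi) / sqrt \<epsilon>" by (simp add: real_sqrt_mult real_sqrt_divide)
      have gz: "g z = sqrt \<epsilon> * (1 / sqrt (2 * pi) * exp (- \<epsilon> * z\<^sup>2 / 2))"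
        unfolding g_def normal_density_def e sq using assms by (simp add: field_simps)
      have "t\<^sup>2 \<le> (-z)\<^sup>2" using True assms by (intro power_mono) auto
      then have "t\<^sup>2 \<le> z\<^sup>2" by simp
      then have "(1 - \<epsilon>) * t\<^sup>2 \<le> (1 - \<epsilon>) * z\<^sup>2" using assms by (simp add: mult_left_mono)
      then have "- z\<^sup>2 / 2 \<le> -(1-\<epsilon>)*t\<^sup>2/2 + (- \<epsilon> * z\<^sup>2 / 2)" by (simp add: algebra_simps)
      then have "exp (- z\<^sup>2 / 2) \<le> exp (-(1-\<epsilon>)*t\<^sup>2/2) * exp (- \<epsilon> * z\<^sup>2 / 2)"
        by (simp flip: exp_add)
      then have "1 / sqrt (2 * pi) * exp (- z\<^sup>2 / 2) \<le> 1 / sqrt (2 * pi) * (exp (-(1-\<epsilon>)*t\<^sup>2/2) * exp (- \<epsilon> * z\<^sup>2 / 2))"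
        by (intro mult_left_mono) auto
      then show ?thesis using True assms unfolding gz std_normal_density_def by (simp add: field_simps)
    qed
  qed
  also have "\<dots> = exp (-(1-\<epsilon>)*t\<^sup>2/2) / sqrt \<epsilon>" unfolding g_def using assms by (simp add: integral_normal_density)
  finally show ?thesis .
qed

lemma upper_tail_lb:
  fixes t :: real
  assumes "0 \<le> t"
  shows "exp (-(t+1)\<^sup>2/2) / sqrt (2 * pi) \<le> (LINT z|lborel. std_normal_density z * indicator {t..} z)"
proof -
  have "exp (-(t+1)\<^sup>2/2) / sqrt (2 * pi) = (LINT z|lborel. std_normal_density (t+1) * indicator {t..t+1} z)"
    by (simp add: std_normal_density_def)
  also have "\<dots> \<le> (LINT z|lborel. std_normal_density z * indicator {t..} z)"
  proof (rule integral_mono)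
    show "integrable lborel (\<lambda>z. std_normal_density z * indicator {t..} z)" by (rule std_int_ind) simp
    show "integrable lborel (\<lambda>z. std_normal_density (t+1) * indicator {t..t+1} z)" by simp
    fix z
    show "std_normal_density (t+1) * indicator {t..t+1} z \<le> std_normal_density z * indicator {t..} z"
    proof (cases "t \<le> z \<and> z \<le> t + 1")
      case False then show ?thesis by (auto simp: indicator_def)
    next
      case True
      have "z\<^sup>2 \<le> (t+1)\<^sup>2" using True assms by (intro power_mono) auto
      then have "exp (-(t+1)\<^sup>2/2) \<le> exp (- z\<^sup>2 / 2)" by simp
      then have "exp (-(t+1)\<^sup>2/2) / sqrt (2 * pi) \<le> exp (- z\<^sup>2 / 2) / sqrt (2 * pi)" by (rule divide_right_mono) simp
      then show ?thesis using True by (simp add: std_normal_density_def indicator_def)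
    qed
  qed
  finally show ?thesis .
qed

lemma lower_tail_lb:
  fixes t :: real
  assumes "0 \<le> t"
  shows "exp (-(t+1)\<^sup>2/2) / sqrt (2 * pi) \<le> (LINT z|lborel. std_normal_density z * indicator {..< -t} z)"
proof -
  have "exp (-(t+1)\<^sup>2/2) / sqrt (2 * pi) = (LINT z|lborel. std_normal_density (t+1) * indicator {-t-1..< -t} z)"
    by (simp add: std_normal_density_def)
  also have "\<dots> \<le> (LINT z|lborel. std_normal_density z * indicator {..< -t} z)"
  proof (rule integral_mono)
    show "integrable lborel (\<lambda>z. std_normal_density z * indicator {..< -t} z)" by (rule std_int_ind) simp
    show "integrable lborel (\<lambda>z. std_normal_density (t+1) * indicator {-t-1..< -t} z)" by simp
    fix z
    show "std_normal_density (t+1) * indicator {-t-1..< -t} z \<le> std_normal_density z * indicator {..< -t} z"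
    proof (cases "-t-1 \<le> z \<and> z < -t")
      case False then show ?thesis by (auto simp: indicator_def)
    next
      case True
      have "(-z)\<^sup>2 \<le> (t+1)\<^sup>2" using True assms by (intro power_mono) auto
      then have "exp (-(t+1)\<^sup>2/2) \<le> exp (- z\<^sup>2 / 2)" by simp
      then have "exp (-(t+1)\<^sup>2/2) / sqrt (2 * pi) \<le> exp (- z\<^sup>2 / 2) / sqrt (2 * pi)" by (rule divide_right_mono) simp
      then show ?thesis using True by (simp add: std_normal_density_def indicator_def)
    qed
  qed
  finally show ?thesis .
qed

lemma asym:
  fixes a b \<delta> :: real
  assumes "0 < b" "b < a" "0 < \<delta>"
  shows "\<exists>\<epsilon>. 0 < \<epsilon> \<and> \<epsilon> < 1 \<and>
    eventually (\<lambda>\<mu>. exp (-(1-\<epsilon>)*(a*\<mu>)\<^sup>2/2) / sqrt \<epsilon> < \<delta> * (exp (-(b*\<mu>+1)\<^sup>2/2) / sqrt (2 * pi))) at_top"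
proof -
  define \<epsilon> where "\<epsilon> = (a\<^sup>2 - b\<^sup>2) / (2 * a\<^sup>2)"
  have b2a2: "b\<^sup>2 < a\<^sup>2" using assms by (intro power_strict_mono) auto
  have a2: "0 < a\<^sup>2" using assms by simp
  have e0: "0 < \<epsilon>" unfolding \<epsilon>_def using b2a2 a2 by simp
  have e1: "\<epsilon> < 1" unfolding \<epsilon>_def
  proof -
    have "a\<^sup>2 - b\<^sup>2 < 1 * (2 * a\<^sup>2)" using b2a2 a2 zero_le_power2[of b] by linarith
    then show "(a\<^sup>2 - b\<^sup>2) / (2 * a\<^sup>2) < 1" using a2 by (subst pos_divide_less_eq) auto
  qed
  define A where "A = (a\<^sup>2 - b\<^sup>2) / 4"
  have A0: "0 < A" unfolding A_def using b2a2 by simp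
  define K where "K = \<delta> * sqrt \<epsilon> / sqrt (2 * pi)"
  have K0: "0 < K" unfolding K_def using e0 assms by simp
  have ev: "eventually (\<lambda>\<mu>. -A*\<mu>^2 + b*\<mu> + 1/2 < ln K) at_top"
    using A0 by real_asymp
  have "eventually (\<lambda>\<mu>. exp (-(1-\<epsilon>)*(a*\<mu>)\<^sup>2/2) / sqrt \<epsilon> < \<delta> * (exp (-(b*\<mu>+1)\<^sup>2/2) / sqrt (2 * pi))) at_top"
    using ev
  proof eventually_elim
    case (elim \<mu>)
    have ea: "(1-\<epsilon>)*a\<^sup>2 = (a\<^sup>2 + b\<^sup>2) / 2"
    proof -
      have "\<epsilon> * a\<^sup>2 = (a\<^sup>2 - b\<^sup>2) / 2" unfolding \<epsilon>_def using a2 by simp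
      then show ?thesis by (simp add: algebra_simps)
    qed
    have q: "-(1-\<epsilon>)*(a*\<mu>)\<^sup>2/2 = (-(b*\<mu>+1)\<^sup>2/2) + (-A*\<mu>^2 + b*\<mu> + 1/2)"
    proof -
      have "-(1-\<epsilon>)*(a*\<mu>)\<^sup>2/2 = -((1-\<epsilon>)*a\<^sup>2) * \<mu>\<^sup>2/2" by (simp add: power_mult_distrib algebra_simps)
      also have "\<dots> = -((a\<^sup>2 + b\<^sup>2) / 2) * \<mu>\<^sup>2/2" by (simp only: ea)
      also have "\<dots> = (-(b*\<mu>+1)\<^sup>2/2) + (-A*\<mu>^2 + b*\<mu> + 1/2)" unfolding A_def
        by (simp add: field_simps power2_eq_square)
      finally show ?thesis .
    qed
    have "exp (-A*\<mu>^2 + b*\<mu> + 1/2) < K" using elim K0 by (metis exp_less_cancel_iff exp_ln)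
    then have "exp (-(1-\<epsilon>)*(a*\<mu>)\<^sup>2/2) < exp (-(b*\<mu>+1)\<^sup>2/2) * K"
      unfolding q exp_add by (intro mult_strict_left_mono) auto
    then show ?case unfolding K_def using e0 by (simp add: field_simps)
  qed
  then show ?thesis using e0 e1 by blast
qed


definition UT :: "real \<Rightarrow> real" where "UT t = (LINT z|lborel. std_normal_density z * indicator {t..} z)"
definition LT :: "real \<Rightarrow> real" where "LT t = (LINT z|lborel. std_normal_density z * indicator {..< -t} z)"

lemma integral_combo:
  fixes w1 w2 t1 t2 :: real and P :: "real \<Rightarrow> real"
  assumes "\<And>z. P z = w1 * indicator {t1..} z + w2 - w2 * indicator {..< -t2} z"
  shows "(LINT z|lborel. std_normal_density z * P z) = w1 * UT t1 + w2 - w2 * LT t2"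
proof -
  have i1: "integrable lborel (\<lambda>z. std_normal_density z * indicator {t1..} z)" by (rule std_int_ind) simp
  have i2: "integrable lborel (\<lambda>z. std_normal_density z * indicator {..< -t2} z)" by (rule std_int_ind) simp
  have "(LINT z|lborel. std_normal_density z * P z) =
     (LINT z|lborel. w1 * (std_normal_density z * indicator {t1..} z) + w2 * std_normal_density z
        - w2 * (std_normal_density z * indicator {..< -t2} z))"
    by (rule Bochner_Integration.integral_cong[OF refl]) (simp add: assms algebra_simps)
  also have "\<dots> = w1 * UT t1 + w2 - w2 * LT t2"
    using i1 i2 unfolding UT_def LT_def
    by (simp add: Bochner_Integration.integral_diff Bochner_Integration.integral_add integrable_diff integrable_add)
  finally show ?thesis .
qed

lemma value_formula:
  fixes \<sigma>1 \<sigma>2 \<rho> w1 w2 c \<mu> :: real and j :: nat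
  assumes "0 < \<sigma>1" "0 < \<sigma>2" "0 < \<rho>" "0 < w1" "0 < w2" "w1 + w2 = 1" "0 \<le> c" "c < 1" "0 < \<mu>"
    and "j = 1 \<or> j = 2"
  defines "p \<equiv> (if j = 1 then \<sigma>1 else \<rho> * \<sigma>1)" and "q \<equiv> (if j = 1 then \<rho> * \<sigma>2 else \<sigma>2)"
  shows "discovery_value (\<lambda>i::nat. if i = 1 then - \<mu> else c * \<mu>) (\<lambda>i::nat. if i = 1 then \<sigma>1 else \<sigma>2) \<rho>
           (\<lambda>i::nat. if i = 1 then w1 else w2) j
         = w1 * UT ((1 - c) * \<mu> / (p + q)) + w2 - w2 * LT (c * \<mu> / q)"
proof -
  let ?M = "\<lambda>i::nat. if i = 1 then - \<mu> else c * \<mu>"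
  let ?S = "\<lambda>i::nat. if i = 1 then \<sigma>1 else \<sigma>2"
  let ?W = "\<lambda>i::nat. if i = 1 then w1 else w2"
  have p0: "0 < p" and q0: "0 < q" unfolding p_def q_def using assms by auto
  have Sj: "0 < ?S j" using assms by auto
  have "discovery_value ?M ?S \<rho> ?W j = (LINT z|lborel. std_normal_density z * best_payoff ?W (post_mean ?M ?S \<rho> j (?M j + ?S j * z)))"
    unfolding discovery_value_def by (rule subst_std[OF Sj])
  also have "\<dots> = w1 * UT ((1 - c) * \<mu> / (p + q)) + w2 - w2 * LT (c * \<mu> / q)"
  proof (rule integral_combo)
    fix z
    let ?e = "post_mean ?M ?S \<rho> j (?M j + ?S j * z)"
    have e1: "?e 1 = -\<mu> + p * z" and e2: "?e 2 = c * \<mu> + q * z"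
      using assms(10) assms(1,2) unfolding post_mean_def p_def q_def by (auto simp: field_simps)
    note C = cond_lemma[OF p0 q0 assms(7,8,9) e1 e2]
    show "best_payoff ?W ?e = w1 * indicator {(1 - c) * \<mu> / (p + q)..} z + w2 - w2 * indicator {..< - (c * \<mu> / q)} z"
      unfolding payoff_formula[OF assms(4,5,6)] C by (simp add: indicator_def algebra_simps)
  qed
  finally show ?thesis .
qed


lemma UT_nonneg: "0 \<le> UT t" unfolding UT_def by (rule integral_nonneg_AE) auto
lemma LT_nonneg: "0 \<le> LT t" unfolding LT_def by (rule integral_nonneg_AE) auto

lemma compare:
  fixes w1 w2 a1 a2 b1 b2 :: real
  assumes "0 < w1" "0 < w2" "0 < a2" "a2 < a1" "0 < b2" "b2 < b1" "b2 < a2"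
  shows "\<exists>\<mu>0. \<forall>\<mu>. 0 < \<mu> \<and> \<mu>0 < \<mu> \<longrightarrow>
     w1 * UT (a1 * \<mu>) + w2 - w2 * LT (b1 * \<mu>) > w1 * UT (a2 * \<mu>) + w2 - w2 * LT (b2 * \<mu>)"
proof -
  obtain \<epsilon>1 where e1: "0 < \<epsilon>1" "\<epsilon>1 < 1" and ev1:
    "eventually (\<lambda>\<mu>. exp (-(1-\<epsilon>1)*(a2*\<mu>)\<^sup>2/2) / sqrt \<epsilon>1 < (w2 / (2 * w1)) * (exp (-(b2*\<mu>+1)\<^sup>2/2) / sqrt (2 * pi))) at_top"
    using asym[of b2 a2 "w2 / (2 * w1)"] assms by auto
  obtain \<epsilon>2 where e2: "0 < \<epsilon>2" "\<epsilon>2 < 1" and ev2: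
    "eventually (\<lambda>\<mu>. exp (-(1-\<epsilon>2)*(b1*\<mu>)\<^sup>2/2) / sqrt \<epsilon>2 < (1/2) * (exp (-(b2*\<mu>+1)\<^sup>2/2) / sqrt (2 * pi))) at_top"
    using asym[of b2 b1 "1/2"] assms by auto
  have "eventually (\<lambda>\<mu>. 0 < \<mu> \<longrightarrow> w1 * UT (a1 * \<mu>) + w2 - w2 * LT (b1 * \<mu>) > w1 * UT (a2 * \<mu>) + w2 - w2 * LT (b2 * \<mu>)) at_top"
    using ev1 ev2
  proof eventually_elim
    case (elim \<mu>)
    show ?case
    proof
      assume \<mu>: "0 < \<mu>"
      define G where "G = exp (-(b2*\<mu>+1)\<^sup>2/2) / sqrt (2 * pi)"
      have U2: "UT (a2 * \<mu>) \<le> exp (-(1-\<epsilon>1)*(a2*\<mu>)\<^sup>2/2) / sqrt \<epsilon>1"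
        unfolding UT_def using assms \<mu> e1 by (intro upper_tail_ub) auto
      have L1: "LT (b1 * \<mu>) \<le> exp (-(1-\<epsilon>2)*(b1*\<mu>)\<^sup>2/2) / sqrt \<epsilon>2"
        unfolding LT_def using assms \<mu> e2 by (intro lower_tail_ub) auto
      have L2: "G \<le> LT (b2 * \<mu>)"
        unfolding LT_def G_def using assms \<mu> by (intro lower_tail_lb) auto
      have U2': "w1 * UT (a2 * \<mu>) < w2 / 2 * G"
      proof -
        have "w1 * UT (a2 * \<mu>) \<le> w1 * (exp (-(1-\<epsilon>1)*(a2*\<mu>)\<^sup>2/2) / sqrt \<epsilon>1)"
          using U2 assms by (intro mult_left_mono) auto
        also have "\<dots> < w1 * ((w2 / (2 * w1)) * G)"
          using elim(1) assms unfolding G_def by (intro mult_strict_left_mono) auto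
        also have "\<dots> = w2 / 2 * G" using assms by simp
        finally show ?thesis .
      qed
      have L1': "w2 * LT (b1 * \<mu>) < w2 / 2 * G"
      proof -
        have "w2 * LT (b1 * \<mu>) \<le> w2 * (exp (-(1-\<epsilon>2)*(b1*\<mu>)\<^sup>2/2) / sqrt \<epsilon>2)"
          using L1 assms by (intro mult_left_mono) auto
        also have "\<dots> < w2 * ((1/2) * G)"
          using elim(2) assms unfolding G_def by (intro mult_strict_left_mono) auto
        also have "\<dots> = w2 / 2 * G" by simp
        finally show ?thesis .
      qed
      have "w2 * G \<le> w2 * LT (b2 * \<mu>)" using L2 assms by simp
      moreover have "0 \<le> w1 * UT (a1 * \<mu>)" using UT_nonneg assms by simp
      ultimately show "w1 * UT (a1 * \<mu>) + w2 - w2 * LT (b1 * \<mu>) > w1 * UT (a2 * \<mu>) + w2 - w2 * LT (b2 * \<mu>)"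
        using U2' L1' by linarith
    qed
  qed
  then obtain N where "\<forall>\<mu>\<ge>N. 0 < \<mu> \<longrightarrow> w1 * UT (a1 * \<mu>) + w2 - w2 * LT (b1 * \<mu>) > w1 * UT (a2 * \<mu>) + w2 - w2 * LT (b2 * \<mu>)"
    unfolding eventually_at_top_linorder by blast
  then show ?thesis by (intro exI[of _ N]) auto
qed


lemma compare2:
  fixes w1 w2 a1 a2 b1 b2 :: real
  assumes "0 < w1" "0 < w2" "0 < a2" "a2 < a1" "0 < b2" "b2 < b1" "a2 < b2"
  shows "\<exists>\<mu>0. \<forall>\<mu>. 0 < \<mu> \<and> \<mu>0 < \<mu> \<longrightarrow>
     w1 * UT (a2 * \<mu>) + w2 - w2 * LT (b2 * \<mu>) > w1 * UT (a1 * \<mu>) + w2 - w2 * LT (b1 * \<mu>)"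
proof -
  obtain \<epsilon>1 where e1: "0 < \<epsilon>1" "\<epsilon>1 < 1" and ev1:
    "eventually (\<lambda>\<mu>. exp (-(1-\<epsilon>1)*(a1*\<mu>)\<^sup>2/2) / sqrt \<epsilon>1 < (1/2) * (exp (-(a2*\<mu>+1)\<^sup>2/2) / sqrt (2 * pi))) at_top"
    using asym[of a2 a1 "1/2"] assms by auto
  obtain \<epsilon>2 where e2: "0 < \<epsilon>2" "\<epsilon>2 < 1" and ev2:
    "eventually (\<lambda>\<mu>. exp (-(1-\<epsilon>2)*(b2*\<mu>)\<^sup>2/2) / sqrt \<epsilon>2 < (w1 / (2 * w2)) * (exp (-(a2*\<mu>+1)\<^sup>2/2) / sqrt (2 * pi))) at_top"
    using asym[of a2 b2 "w1 / (2 * w2)"] assms by auto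
  have "eventually (\<lambda>\<mu>. 0 < \<mu> \<longrightarrow> w1 * UT (a2 * \<mu>) + w2 - w2 * LT (b2 * \<mu>) > w1 * UT (a1 * \<mu>) + w2 - w2 * LT (b1 * \<mu>)) at_top"
    using ev1 ev2
  proof eventually_elim
    case (elim \<mu>)
    show ?case
    proof
      assume \<mu>: "0 < \<mu>"
      define G where "G = exp (-(a2*\<mu>+1)\<^sup>2/2) / sqrt (2 * pi)"
      have U1: "UT (a1 * \<mu>) \<le> exp (-(1-\<epsilon>1)*(a1*\<mu>)\<^sup>2/2) / sqrt \<epsilon>1"
        unfolding UT_def using assms \<mu> e1 by (intro upper_tail_ub) auto
      have L2: "LT (b2 * \<mu>) \<le> exp (-(1-\<epsilon>2)*(b2*\<mu>)\<^sup>2/2) / sqrt \<epsilon>2"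
        unfolding LT_def using assms \<mu> e2 by (intro lower_tail_ub) auto
      have U2: "G \<le> UT (a2 * \<mu>)"
        unfolding UT_def G_def using assms \<mu> by (intro upper_tail_lb) auto
      have U1': "w1 * UT (a1 * \<mu>) < w1 / 2 * G"
      proof -
        have "w1 * UT (a1 * \<mu>) \<le> w1 * (exp (-(1-\<epsilon>1)*(a1*\<mu>)\<^sup>2/2) / sqrt \<epsilon>1)"
          using U1 assms by (intro mult_left_mono) auto
        also have "\<dots> < w1 * ((1/2) * G)"
          using elim(1) assms unfolding G_def by (intro mult_strict_left_mono) auto
        also have "\<dots> = w1 / 2 * G" by simp
        finally show ?thesis .
      qed
      have L2': "w2 * LT (b2 * \<mu>) < w1 / 2 * G"
      proof -
        have "w2 * LT (b2 * \<mu>) \<le> w2 * (exp (-(1-\<epsilon>2)*(b2*\<mu>)\<^sup>2/2) / sqrt \<epsilon>2)"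
          using L2 assms by (intro mult_left_mono) auto
        also have "\<dots> < w2 * ((w1 / (2 * w2)) * G)"
          using elim(2) assms unfolding G_def by (intro mult_strict_left_mono) auto
        also have "\<dots> = w1 / 2 * G" using assms by simp
        finally show ?thesis .
      qed
      have "w1 * G \<le> w1 * UT (a2 * \<mu>)" using U2 assms by simp
      moreover have "0 \<le> w2 * LT (b1 * \<mu>)" using LT_nonneg assms by simp
      ultimately show "w1 * UT (a2 * \<mu>) + w2 - w2 * LT (b2 * \<mu>) > w1 * UT (a1 * \<mu>) + w2 - w2 * LT (b1 * \<mu>)"
        using U1' L2' by linarith
    qed
  qed
  then obtain N where "\<forall>\<mu>\<ge>N. 0 < \<mu> \<longrightarrow> w1 * UT (a2 * \<mu>) + w2 - w2 * LT (b2 * \<mu>) > w1 * UT (a1 * \<mu>) + w2 - w2 * LT (b1 * \<mu>)"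
    unfolding eventually_at_top_linorder by blast
  then show ?thesis by (intro exI[of _ N]) auto
qed

theorem lemma1:
  fixes \<sigma>1 \<sigma>2 \<rho> w1 w2 :: real
  assumes "0 < \<sigma>1" and "\<sigma>1 < \<sigma>2"
    and "0 < \<rho>" and "\<rho> < 1"
    and "0 < w1" and "0 < w2" and "w1 + w2 = 1"
  defines "s \<equiv> (\<lambda>i::nat. if i = 1 then \<sigma>1 else \<sigma>2)"
    and "w \<equiv> (\<lambda>i::nat. if i = 1 then w1 else w2)"
    and "m \<equiv> (\<lambda>(c::real) (\<mu>::real) (i::nat). if i = 1 then - \<mu> else c * \<mu>)"
    and "cstar \<equiv> \<rho> * \<sigma>2 / (\<sigma>1 + 2 * \<rho> * \<sigma>2)"
    and "cstarstar \<equiv> \<sigma>2 / (\<rho> * \<sigma>1 + 2 * \<sigma>2)"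
  shows "(\<forall>c. cstar < c \<and> c < cstarstar \<longrightarrow>
            (\<exists>\<mu>0. \<forall>\<mu>. 0 < \<mu> \<and> \<mu>0 < \<mu> \<longrightarrow>
               discovery_value (m c \<mu>) s \<rho> w 1 > discovery_value (m c \<mu>) s \<rho> w 2))
       \<and> (\<forall>c. cstarstar < c \<and> c < 1 \<longrightarrow>
            (\<exists>\<mu>0. \<forall>\<mu>. 0 < \<mu> \<and> \<mu>0 < \<mu> \<longrightarrow>
               discovery_value (m c \<mu>) s \<rho> w 2 > discovery_value (m c \<mu>) s \<rho> w 1))"
proof -
  have s2: "0 < \<sigma>2" using assms by simp
  have V: "discovery_value (m c \<mu>) s \<rho> w 1 = w1 * UT (((1 - c) / (\<sigma>1 + \<rho> * \<sigma>2)) * \<mu>) + w2 - w2 * LT ((c / (\<rho> * \<sigma>2)) * \<mu>)"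
      "discovery_value (m c \<mu>) s \<rho> w 2 = w1 * UT (((1 - c) / (\<rho> * \<sigma>1 + \<sigma>2)) * \<mu>) + w2 - w2 * LT ((c / \<sigma>2) * \<mu>)"
    if "0 \<le> c" "c < 1" "0 < \<mu>" for c \<mu>
    using value_formula[of \<sigma>1 \<sigma>2 \<rho> w1 w2 c \<mu> 1] value_formula[of \<sigma>1 \<sigma>2 \<rho> w1 w2 c \<mu> 2] assms(1,3,5,6,7) s2 that
    unfolding m_def s_def w_def by (auto simp: field_simps)
  have rs: "0 < \<rho> * \<sigma>2" "0 < \<rho> * \<sigma>1" using assms s2 by simp_all
  have den1: "0 < \<sigma>1 + \<rho> * \<sigma>2" and den2: "0 < \<rho> * \<sigma>1 + \<sigma>2" using assms s2 rs by linarith+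
  have dd: "\<sigma>1 + \<rho> * \<sigma>2 < \<rho> * \<sigma>1 + \<sigma>2"
  proof -
    have "0 < (1 - \<rho>) * (\<sigma>2 - \<sigma>1)" using assms by simp
    then show ?thesis by (simp add: algebra_simps)
  qed
  have cs0: "0 < cstar" unfolding cstar_def using rs assms by (intro divide_pos_pos) linarith+
  have dd2: "0 < \<rho> * \<sigma>1 + 2 * \<sigma>2" using rs s2 by linarith
  have css1: "cstarstar < 1" unfolding cstarstar_def
  proof -
    have d: "0 < \<rho> * \<sigma>1 + 2 * \<sigma>2" using rs s2 by linarith
    have "\<sigma>2 < 1 * (\<rho> * \<sigma>1 + 2 * \<sigma>2)" using rs s2 by simp
    then show "\<sigma>2 / (\<rho> * \<sigma>1 + 2 * \<sigma>2) < 1" using d by (subst pos_divide_less_eq) auto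
  qed
  have common: "0 < (1 - c) / (\<rho> * \<sigma>1 + \<sigma>2)" "(1 - c) / (\<rho> * \<sigma>1 + \<sigma>2) < (1 - c) / (\<sigma>1 + \<rho> * \<sigma>2)"
      "0 < c / \<sigma>2" "c / \<sigma>2 < c / (\<rho> * \<sigma>2)"
    if "0 < c" "c < 1" for c
  proof -
    show "0 < (1 - c) / (\<rho> * \<sigma>1 + \<sigma>2)" using that den2 by simp
    show "(1 - c) / (\<rho> * \<sigma>1 + \<sigma>2) < (1 - c) / (\<sigma>1 + \<rho> * \<sigma>2)"
      using that den1 dd by (intro divide_strict_left_mono) auto
    show "0 < c / \<sigma>2" using that s2 by simp
    have "\<rho> * \<sigma>2 < \<sigma>2" using assms s2 by simp
    then show "c / \<sigma>2 < c / (\<rho> * \<sigma>2)"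
      using that assms s2 by (intro divide_strict_left_mono) auto
  qed
  have key: "c / \<sigma>2 < (1 - c) / (\<rho> * \<sigma>1 + \<sigma>2) \<longleftrightarrow> c < cstarstar" for c
  proof -
    have "c / \<sigma>2 < (1 - c) / (\<rho> * \<sigma>1 + \<sigma>2) \<longleftrightarrow> c * (\<rho> * \<sigma>1 + \<sigma>2) < (1 - c) * \<sigma>2"
      using s2 den2 by (simp add: divide_less_eq less_divide_eq field_simps)
    also have "\<dots> \<longleftrightarrow> c * (\<rho> * \<sigma>1 + 2 * \<sigma>2) < \<sigma>2" by (simp add: algebra_simps)
    also have "\<dots> \<longleftrightarrow> c < cstarstar" unfolding cstarstar_def using dd2
      by (simp add: pos_less_divide_eq)
    finally show ?thesis .
  qed
  show ?thesis
  proof (intro conjI allI impI)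
    fix c assume c: "cstar < c \<and> c < cstarstar"
    then have c0: "0 < c" and c1: "c < 1" using cs0 css1 by auto
    obtain \<mu>0 where H: "\<forall>\<mu>. 0 < \<mu> \<and> \<mu>0 < \<mu> \<longrightarrow>
      w1 * UT (((1 - c) / (\<sigma>1 + \<rho> * \<sigma>2)) * \<mu>) + w2 - w2 * LT ((c / (\<rho> * \<sigma>2)) * \<mu>) >
      w1 * UT (((1 - c) / (\<rho> * \<sigma>1 + \<sigma>2)) * \<mu>) + w2 - w2 * LT ((c / \<sigma>2) * \<mu>)"
      using compare[OF assms(5,6) common[OF c0 c1]] key c by blast
    show "\<exists>\<mu>0. \<forall>\<mu>. 0 < \<mu> \<and> \<mu>0 < \<mu> \<longrightarrow> discovery_value (m c \<mu>) s \<rho> w 1 > discovery_value (m c \<mu>) s \<rho> w 2"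
      using H V c0 c1 by (intro exI[of _ \<mu>0]) auto
  next
    fix c assume c: "cstarstar < c \<and> c < 1"
    have css0: "0 < cstarstar" unfolding cstarstar_def using dd2 s2 by simp
    then have c0: "0 < c" and c1: "c < 1" using c by auto
    have k: "(1 - c) / (\<rho> * \<sigma>1 + \<sigma>2) < c / \<sigma>2"
    proof -
      have "\<not> c / \<sigma>2 < (1 - c) / (\<rho> * \<sigma>1 + \<sigma>2)" using key c by auto
      moreover have "c / \<sigma>2 \<noteq> (1 - c) / (\<rho> * \<sigma>1 + \<sigma>2)"
      proof
        assume "c / \<sigma>2 = (1 - c) / (\<rho> * \<sigma>1 + \<sigma>2)"
        then have "c * (\<rho> * \<sigma>1 + 2 * \<sigma>2) = \<sigma>2" using s2 den2 by (simp add: field_simps)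
        then have "c = cstarstar" unfolding cstarstar_def using dd2 by (simp add: eq_divide_eq)
        then show False using c by simp
      qed
      ultimately show ?thesis by linarith
    qed
    obtain \<mu>0 where H: "\<forall>\<mu>. 0 < \<mu> \<and> \<mu>0 < \<mu> \<longrightarrow>
      w1 * UT (((1 - c) / (\<rho> * \<sigma>1 + \<sigma>2)) * \<mu>) + w2 - w2 * LT ((c / \<sigma>2) * \<mu>) >
      w1 * UT (((1 - c) / (\<sigma>1 + \<rho> * \<sigma>2)) * \<mu>) + w2 - w2 * LT ((c / (\<rho> * \<sigma>2)) * \<mu>)"
      using compare2[OF assms(5,6) common[OF c0 c1] k] by blast
    show "\<exists>\<mu>0. \<forall>\<mu>. 0 < \<mu> \<and> \<mu>0 < \<mu> \<longrightarrow> discovery_value (m c \<mu>) s \<rho> w 2 > discovery_value (m c \<mu>) s \<rho> w 1"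
      using H V c0 c1 by (intro exI[of _ \<mu>0]) auto
  qed
qed

end
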